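(* Every monotone $\upsilon$-quasi-lattice is a $\mu$-quasi-lattice, and its $\upsilon$-quasi-supremum and $\mu$-quasi-supremum of every pair $\{x,y\}$ coincide.
   Context: A pre-ordered Banach space is a real Banach space $X$ with a cone $X_+$ ($X_++X_+\subseteq X_+$, $\lambda X_+\subseteq X_+$ for $\lambda\ge0$); $x\le y$ means $y-x\in X_+$. $X$ is monotone if $0\le x\le y$ implies $\|x\|\le\|y\|$. For $A\subseteq X$, $\upsilon(A)$ is the set of upper bounds and $\mu(A)$ the set of minimal upper bounds ($z\in\upsilon(A)$ such that $A\le w\le z$ implies $w=z$). Let $\sigma_{x,y}(z)=\|z-x\|+\|z-y\|$. A pre-ordered Banach space with closed cone is a $\upsilon$-quasi-lattice (resp. $\mu$-quasi-lattice) if for all $x,y$ the set $\upsilon(\{x,y\})$ (resp. $\mu(\{x,y\})$) is non-empty and contains a unique minimizer of $\sigma_{x,y}$ on that set, called the $\upsilon$-quasi-supremum (resp. $\mu$-quasi-supremum) of $\{x,y\}$. *)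

theory Defs
  imports "HOL-Analysis.Analysis"
begin

definition is_cone :: "'a::real_vector set \<Rightarrow> bool" where
  "is_cone C \<longleftrightarrow> (\<forall>x\<in>C. \<forall>y\<in>C. x + y \<in> C) \<and> (\<forall>x\<in>C. \<forall>l::real. l \<ge> 0 \<longrightarrow> l *\<^sub>R x \<in> C)"

definition cle :: "'a::real_vector set \<Rightarrow> 'a \<Rightarrow> 'a \<Rightarrow> bool" where
  "cle C x y \<longleftrightarrow> y - x \<in> C"

definition is_monotone :: "'a::real_normed_vector set \<Rightarrow> bool" where
  "is_monotone C \<longleftrightarrow> (\<forall>x y. cle C 0 x \<and> cle C x y \<longrightarrow> norm x \<le> norm y)"

definition ubounds :: "'a::real_vector set \<Rightarrow> 'a set \<Rightarrow> 'a set" where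
  "ubounds C A = {z. \<forall>a\<in>A. cle C a z}"

definition minubounds :: "'a::real_vector set \<Rightarrow> 'a set \<Rightarrow> 'a set" where
  "minubounds C A = {z \<in> ubounds C A. \<forall>w. w \<in> ubounds C A \<and> cle C w z \<longrightarrow> w = z}"

definition sigma :: "'a::real_normed_vector \<Rightarrow> 'a \<Rightarrow> 'a \<Rightarrow> real" where
  "sigma x y z = norm (z - x) + norm (z - y)"

definition is_sigma_min :: "'a::real_normed_vector \<Rightarrow> 'a \<Rightarrow> 'a set \<Rightarrow> 'a \<Rightarrow> bool" where
  "is_sigma_min x y S z \<longleftrightarrow> z \<in> S \<and> (\<forall>w\<in>S. sigma x y z \<le> sigma x y w)"

definition upsilon_quasi_lattice :: "'a::banach set \<Rightarrow> bool" where
  "upsilon_quasi_lattice C \<longleftrightarrow> is_cone C \<and> closed C \<and>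
     (\<forall>x y. ubounds C {x, y} \<noteq> {} \<and> (\<exists>!z. is_sigma_min x y (ubounds C {x, y}) z))"

definition mu_quasi_lattice :: "'a::banach set \<Rightarrow> bool" where
  "mu_quasi_lattice C \<longleftrightarrow> is_cone C \<and> closed C \<and>
     (\<forall>x y. minubounds C {x, y} \<noteq> {} \<and> (\<exists>!z. is_sigma_min x y (minubounds C {x, y}) z))"

definition upsilon_qsup :: "'a::banach set \<Rightarrow> 'a \<Rightarrow> 'a \<Rightarrow> 'a" where
  "upsilon_qsup C x y = (THE z. is_sigma_min x y (ubounds C {x, y}) z)"

definition mu_qsup :: "'a::banach set \<Rightarrow> 'a \<Rightarrow> 'a \<Rightarrow> 'a" where
  "mu_qsup C x y = (THE z. is_sigma_min x y (minubounds C {x, y}) z)"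

end

theory Submission
  imports Defs
begin

lemma key:
  fixes C :: "'a::banach set"
  assumes mon: "is_monotone C" and U: "upsilon_quasi_lattice C"
  shows "is_sigma_min x y (minubounds C {x, y}) (upsilon_qsup C x y)
     \<and> (\<forall>z'. is_sigma_min x y (minubounds C {x, y}) z' \<longrightarrow> z' = upsilon_qsup C x y)"
proof -
  let ?U = "ubounds C {x, y}"
  have ex: "\<exists>!z. is_sigma_min x y ?U z" using U unfolding upsilon_quasi_lattice_def by simp
  then obtain z where z: "is_sigma_min x y ?U z" by blast
  have uniq: "\<And>w. is_sigma_min x y ?U w \<Longrightarrow> w = z" using ex z by (metis the1_equality)
  have zq: "upsilon_qsup C x y = z" unfolding upsilon_qsup_def by (rule the1_equality[OF ex z])
  have zU: "z \<in> ?U" using z unfolding is_sigma_min_def by simp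
  have zmin: "z \<in> minubounds C {x, y}"
    unfolding minubounds_def
  proof (intro CollectI conjI allI impI zU)
    fix w assume w: "w \<in> ?U \<and> cle C w z"
    have wx: "cle C x w" "cle C y w" using w unfolding ubounds_def by simp_all
    have wz: "z - w \<in> C" using w unfolding cle_def by simp
    have mon': "\<And>a b. a \<in> C \<Longrightarrow> b - a \<in> C \<Longrightarrow> norm a \<le> norm b"
      using mon unfolding is_monotone_def cle_def by (metis diff_zero)
    have e1: "(z - x) - (w - x) = z - w" "(z - y) - (w - y) = z - w" by simp_all
    have n1: "norm (w - x) \<le> norm (z - x)"
      using mon'[of "w - x" "z - x"] wx wz e1 unfolding cle_def by simp
    have n2: "norm (w - y) \<le> norm (z - y)"
      using mon'[of "w - y" "z - y"] wx wz e1 unfolding cle_def by simp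
    have "is_sigma_min x y ?U w"
      unfolding is_sigma_min_def
    proof (intro conjI ballI)
      show "w \<in> ?U" using w by simp
      fix v assume "v \<in> ?U"
      hence "sigma x y z \<le> sigma x y v" using z unfolding is_sigma_min_def by simp
      moreover have "sigma x y w \<le> sigma x y z" using n1 n2 unfolding sigma_def by simp
      ultimately show "sigma x y w \<le> sigma x y v" by simp
    qed
    thus "w = z" by (rule uniq)
  qed
  have sub: "minubounds C {x, y} \<subseteq> ?U" unfolding minubounds_def by blast
  have A: "is_sigma_min x y (minubounds C {x, y}) z"
    unfolding is_sigma_min_def
    proof (intro conjI ballI)
      show "z \<in> minubounds C {x, y}" by (rule zmin)
      fix v assume "v \<in> minubounds C {x, y}"
      hence "v \<in> ?U" using sub by blast
      thus "sigma x y z \<le> sigma x y v" using z unfolding is_sigma_min_def by simp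
    qed
  have B: "\<forall>z'. is_sigma_min x y (minubounds C {x, y}) z' \<longrightarrow> z' = z"
  proof (intro allI impI)
    fix z' assume h: "is_sigma_min x y (minubounds C {x, y}) z'"
    have "is_sigma_min x y ?U z'"
      unfolding is_sigma_min_def
    proof (intro conjI ballI)
      have hz: "sigma x y z' \<le> sigma x y z" using h zmin unfolding is_sigma_min_def by simp
      show "z' \<in> ?U" using h sub unfolding is_sigma_min_def by blast
      fix v assume "v \<in> ?U"
      hence "sigma x y z \<le> sigma x y v" using z unfolding is_sigma_min_def by simp
      thus "sigma x y z' \<le> sigma x y v" using hz by simp
    qed
    thus "z' = z" by (rule uniq)
  qed
  show ?thesis unfolding zq using A B by blast
qed

theorem theorem5p12:
  fixes C :: "'a::banach set"
  assumes "is_monotone C"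
    and "upsilon_quasi_lattice C"
  shows "mu_quasi_lattice C \<and> (\<forall>x y. upsilon_qsup C x y = mu_qsup C x y)"
proof -
  have M: "mu_quasi_lattice C"
    unfolding mu_quasi_lattice_def
  proof (intro conjI allI)
    show "is_cone C" "closed C" using assms(2) upsilon_quasi_lattice_def by blast+
  next
    fix x y show "minubounds C {x, y} \<noteq> {}"
      using key[OF assms, of x y] unfolding is_sigma_min_def by blast
  next
    fix x y show "\<exists>!z. is_sigma_min x y (minubounds C {x, y}) z"
      using key[OF assms, of x y] by blast
  qed
  have "\<forall>x y. upsilon_qsup C x y = mu_qsup C x y"
  proof (intro allI)
    fix x y
    have "mu_qsup C x y = upsilon_qsup C x y"
      unfolding mu_qsup_def using key[OF assms, of x y] by (intro the_equality) blast+
    thus "upsilon_qsup C x y = mu_qsup C x y" by simp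
  qed
  with M show ?thesis by blast
qed

end
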